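(* Assume the setting described in the context and suppose that for some $\gamma>1/2$, $\sum_i\lambda_i^{2\gamma-2\delta}<\infty$. Then almost surely, for every $s\in[0,1)$, the map $t\mapsto\Big(E\mapsto\int_s^tAS(t-r)E(\omega(r)-\omega(s))\,dr\Big)$ defines an element of $C_\gamma([s,1];L_2(L_2(V,V_\delta),V))$, and its $\gamma$-Hölder seminorm is bounded independently of $s\in[0,1]$.
   Context: $V$ is a separable real Hilbert space; $A$ is linear with $-A$ positive self-adjoint with compact inverse, orthonormal eigenbasis $(e_i)$, $-Ae_i=\lambda_ie_i$, $\lambda_i>0$, generating the analytic semigroup $S(t)$; $V_\delta=D((-A)^\delta)$ with $|x|_{V_\delta}=|(-A)^\delta x|$, $\delta\in[0,1]$, $\sum_i\lambda_i^{-2\delta}<\infty$; $\beta'\in(1/3,1/2)$. $L_2(X,Y)$ denotes Hilbert–Schmidt operators; $C_\gamma([s,1];X)$ is the space of $\gamma$-Hölder continuous $X$-valued functions. $Q$ is a positive symmetric trace-class operator on $V$ with $Qe_i=q_ie_i$, $q_i>0$, $\sum q_i<\infty$; $\omega$ is a $Q$-Wiener process on $[0,1]$ in $V$, in a version with $\gamma'$-Hölder paths for all $\gamma'<1/2$. *)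

theory Defs
  imports "HOL-Analysis.Analysis" "HOL-Probability.Probability"
begin

text \<open>V is a separable real Hilbert space (type 'v), e is an orthonormal
  eigenbasis of -A with eigenvalues lam i > 0.  All operators built from A are given
  through this eigenbasis (spectral calculus).\<close>

definition ONB :: "(nat \<Rightarrow> 'v::{real_inner,banach}) \<Rightarrow> bool" where
  "ONB e \<longleftrightarrow> (\<forall>i j. e i \<bullet> e j = (if i = j then 1 else 0)) \<and> closure (span (range e)) = UNIV"

definition opA :: "(nat \<Rightarrow> 'v::{real_inner,banach}) \<Rightarrow> (nat \<Rightarrow> real) \<Rightarrow> 'v \<Rightarrow> 'v" where
  "opA e lam x = (\<Sum>i. (- lam i * (x \<bullet> e i)) *\<^sub>R e i)"

definition semigr :: "(nat \<Rightarrow> 'v::{real_inner,banach}) \<Rightarrow> (nat \<Rightarrow> real) \<Rightarrow> real \<Rightarrow> 'v \<Rightarrow> 'v" where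
  "semigr e lam t x = (\<Sum>i. (exp (- lam i * t) * (x \<bullet> e i)) *\<^sub>R e i)"

definition Vdelta :: "(nat \<Rightarrow> 'v::{real_inner,banach}) \<Rightarrow> (nat \<Rightarrow> real) \<Rightarrow> real \<Rightarrow> 'v set" where
  "Vdelta e lam \<delta> = {x. summable (\<lambda>i. (lam i powr \<delta> * (x \<bullet> e i))\<^sup>2)}"

definition fracpow :: "(nat \<Rightarrow> 'v::{real_inner,banach}) \<Rightarrow> (nat \<Rightarrow> real) \<Rightarrow> real \<Rightarrow> 'v \<Rightarrow> 'v" where
  "fracpow e lam \<delta> x = (\<Sum>i. (lam i powr \<delta> * (x \<bullet> e i)) *\<^sub>R e i)"

definition norm_Vdelta :: "(nat \<Rightarrow> 'v::{real_inner,banach}) \<Rightarrow> (nat \<Rightarrow> real) \<Rightarrow> real \<Rightarrow> 'v \<Rightarrow> real" where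
  "norm_Vdelta e lam \<delta> x = norm (fracpow e lam \<delta> x)"

definition HS_V_Vdelta :: "(nat \<Rightarrow> 'v::{real_inner,banach}) \<Rightarrow> (nat \<Rightarrow> real) \<Rightarrow> real \<Rightarrow> ('v \<Rightarrow> 'v) set" where
  "HS_V_Vdelta e lam \<delta> = {E. bounded_linear E \<and> (\<forall>x. E x \<in> Vdelta e lam \<delta>) \<and>
       summable (\<lambda>j. (norm_Vdelta e lam \<delta> (E (e j)))\<^sup>2)}"

definition HSbasis :: "(nat \<Rightarrow> 'v::{real_inner,banach}) \<Rightarrow> (nat \<Rightarrow> real) \<Rightarrow> real \<Rightarrow> nat \<times> nat \<Rightarrow> 'v \<Rightarrow> 'v" where
  "HSbasis e lam \<delta> ij x = (lam (fst ij) powr (- \<delta>) * (x \<bullet> e (snd ij))) *\<^sub>R e (fst ij)"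

text \<open>Squared Hilbert-Schmidt norm in L_2(L_2(V,V_delta),V) (computed in the above ONB;
  value \<infinity> if the operator is not Hilbert-Schmidt).\<close>
definition HS_sq :: "(nat \<Rightarrow> 'v::{real_inner,banach}) \<Rightarrow> (nat \<Rightarrow> real) \<Rightarrow> real \<Rightarrow> (('v \<Rightarrow> 'v) \<Rightarrow> 'v) \<Rightarrow> ennreal" where
  "HS_sq e lam \<delta> T = (\<integral>\<^sup>+ ij. ennreal ((norm (T (HSbasis e lam \<delta> ij)))\<^sup>2) \<partial>count_space UNIV)"

text \<open>Covariance form <Qh,h> of Q = sum q_i e_i (x) e_i.\<close>
definition Qform :: "(nat \<Rightarrow> 'v::{real_inner,banach}) \<Rightarrow> (nat \<Rightarrow> real) \<Rightarrow> 'v \<Rightarrow> real" where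
  "Qform e q h = (\<Sum>i. q i * (h \<bullet> e i)\<^sup>2)"

definition Q_Wiener :: "'a measure \<Rightarrow> (nat \<Rightarrow> 'v::{real_inner,banach,second_countable_topology}) \<Rightarrow> (nat \<Rightarrow> real)
     \<Rightarrow> ('a \<Rightarrow> real \<Rightarrow> 'v) \<Rightarrow> bool" where
  "Q_Wiener M e q W \<longleftrightarrow>
     (\<forall>t\<in>{0..1}. (\<lambda>x. W x t) \<in> borel_measurable M) \<and>
     (AE x in M. W x 0 = 0) \<and>
     (\<forall>n (t::nat \<Rightarrow> real). (\<forall>k\<le>n. t k \<in> {0..1}) \<and> (\<forall>k<n. t k \<le> t (Suc k)) \<longrightarrow>
        prob_space.indep_vars M (\<lambda>_. borel) (\<lambda>k x. W x (t (Suc k)) - W x (t k)) {..<n}) \<and>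
     (\<forall>u\<in>{0..1}. \<forall>t\<in>{0..1}. \<forall>h. u < t \<and> h \<noteq> 0 \<longrightarrow>
        distributed M lborel (\<lambda>x. (W x t - W x u) \<bullet> h)
          (\<lambda>y. ennreal (normal_density 0 (sqrt ((t - u) * Qform e q h)) y)))"

definition holder_on :: "real \<Rightarrow> real set \<Rightarrow> (real \<Rightarrow> 'v::real_normed_vector) \<Rightarrow> bool" where
  "holder_on \<gamma> S f \<longleftrightarrow> (\<exists>C. \<forall>x\<in>S. \<forall>y\<in>S. norm (f x - f y) \<le> C * \<bar>x - y\<bar> powr \<gamma>)"

end

theory Submission
  imports Defs
begin

definition orthn :: "(nat \<Rightarrow> 'v::{real_inner,banach}) \<Rightarrow> bool" where
  "orthn e \<longleftrightarrow> (\<forall>i j. e i \<bullet> e j = (if i = j then 1 else 0))"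

lemma orthn_ONB: "ONB e \<Longrightarrow> orthn e" by (simp add: ONB_def orthn_def)

lemma orthn_norm_sum:
  assumes "orthn e" "finite I"
  shows "(norm (\<Sum>i\<in>I. c i *\<^sub>R e i))\<^sup>2 = (\<Sum>i\<in>I. (c i)\<^sup>2)"
proof -
  have "(norm (\<Sum>i\<in>I. c i *\<^sub>R e i))\<^sup>2 = (\<Sum>i\<in>I. \<Sum>j\<in>I. c i * (c j * (e j \<bullet> e i)))"
    by (simp add: power2_norm_eq_inner inner_sum_left inner_sum_right sum_distrib_left mult.assoc)
  also have "\<dots> = (\<Sum>i\<in>I. \<Sum>j\<in>I. if i = j then c i * c j else 0)"
    using assms(1) by (auto simp: orthn_def intro!: sum.cong)
  also have "\<dots> = (\<Sum>i\<in>I. (c i)\<^sup>2)"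
    using assms(2) by (simp add: power2_eq_square)
  finally show ?thesis .
qed

lemma orthn_inner_sum:
  assumes "orthn e" "finite I"
  shows "(\<Sum>i\<in>I. c i *\<^sub>R e i) \<bullet> e k = (if k \<in> I then c k else 0)"
proof -
  have "(\<Sum>i\<in>I. c i *\<^sub>R e i) \<bullet> e k = (\<Sum>i\<in>I. if i = k then c i else 0)"
    using assms(1) by (auto simp: inner_sum_left orthn_def intro!: sum.cong)
  also have "\<dots> = (if k \<in> I then c k else 0)" using assms(2) by simp
  finally show ?thesis .
qed

lemma bessel_partial:
  assumes "orthn e" "finite I"
  shows "(\<Sum>i\<in>I. (x \<bullet> e i)\<^sup>2) \<le> (norm x)\<^sup>2"
proof -
  define p where "p = (\<Sum>i\<in>I. (x \<bullet> e i) *\<^sub>R e i)"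
  have np: "(norm p)\<^sup>2 = (\<Sum>i\<in>I. (x \<bullet> e i)\<^sup>2)" unfolding p_def by (rule orthn_norm_sum[OF assms])
  have xp: "x \<bullet> p = (\<Sum>i\<in>I. (x \<bullet> e i)\<^sup>2)"
    unfolding p_def by (simp add: inner_sum_right power2_eq_square)
  have "0 \<le> (norm (x - p))\<^sup>2" by simp
  also have "\<dots> = (norm x)\<^sup>2 - 2 * (x \<bullet> p) + (norm p)\<^sup>2"
    by (simp add: power2_norm_eq_inner inner_diff_left inner_diff_right inner_commute)
  finally show ?thesis using np xp by simp
qed

lemma bessel:
  assumes "orthn e"
  shows "summable (\<lambda>i. (x \<bullet> e i)\<^sup>2)" "(\<Sum>i. (x \<bullet> e i)\<^sup>2) \<le> (norm x)\<^sup>2"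
proof -
  show s: "summable (\<lambda>i. (x \<bullet> e i)\<^sup>2)"
    by (rule summableI_nonneg_bounded[where x="(norm x)\<^sup>2"]) (auto intro: bessel_partial[OF assms])
  show "(\<Sum>i. (x \<bullet> e i)\<^sup>2) \<le> (norm x)\<^sup>2"
    by (rule suminf_le_const[OF s]) (auto intro: bessel_partial[OF assms])
qed

lemma orthn_summable:
  assumes "orthn e" "summable (\<lambda>i. (c i)\<^sup>2)"
  shows "summable (\<lambda>i. c i *\<^sub>R e i)"
  unfolding summable_Cauchy
proof (intro allI impI)
  fix \<epsilon> :: real assume "\<epsilon> > 0"
  then have "\<epsilon>\<^sup>2 > 0" by simp
  with assms(2)[unfolded summable_Cauchy] obtain N where
    N: "\<forall>m\<ge>N. \<forall>n. norm (sum (\<lambda>i. (c i)\<^sup>2) {m..<n}) < \<epsilon>\<^sup>2" by blast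
  show "\<exists>N. \<forall>m\<ge>N. \<forall>n. norm (sum (\<lambda>i. c i *\<^sub>R e i) {m..<n}) < \<epsilon>"
  proof (intro exI allI impI)
    fix m n assume "N \<le> m"
    then have "norm (sum (\<lambda>i. (c i)\<^sup>2) {m..<n}) < \<epsilon>\<^sup>2" using N by blast
    then have "(norm (sum (\<lambda>i. c i *\<^sub>R e i) {m..<n}))\<^sup>2 < \<epsilon>\<^sup>2"
      using orthn_norm_sum[OF assms(1), of "{m..<n}" c] by (simp add: sum_nonneg)
    then show "norm (sum (\<lambda>i. c i *\<^sub>R e i) {m..<n}) < \<epsilon>"
      using \<open>\<epsilon> > 0\<close> by (simp add: power_less_imp_less_base)
  qed
qed

lemma orthn_suminf_inner:
  assumes "orthn e" "summable (\<lambda>i. (c i)\<^sup>2)"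
  shows "(\<Sum>i. c i *\<^sub>R e i) \<bullet> e k = c k"
proof -
  have "(\<lambda>i. c i *\<^sub>R e i) sums (\<Sum>i. c i *\<^sub>R e i)" using orthn_summable[OF assms] by blast
  then have "(\<lambda>n. (\<Sum>i<n. c i *\<^sub>R e i) \<bullet> e k) \<longlonglongrightarrow> (\<Sum>i. c i *\<^sub>R e i) \<bullet> e k"
    unfolding sums_def by (intro tendsto_intros)
  moreover have "(\<lambda>n. (\<Sum>i<n. c i *\<^sub>R e i) \<bullet> e k) = (\<lambda>n. \<Sum>i<n. if i = k then c i else 0)"
    using orthn_inner_sum[OF assms(1)] by simp
  moreover have "(\<lambda>n. \<Sum>i<n. if i = k then c i else 0) \<longlonglongrightarrow> c k"
    using sums_single[of k c] unfolding sums_def .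
  ultimately show ?thesis using LIMSEQ_unique by metis
qed

lemma orthn_norm_suminf:
  assumes "orthn e" "summable (\<lambda>i. (c i)\<^sup>2)"
  shows "(norm (\<Sum>i. c i *\<^sub>R e i))\<^sup>2 = (\<Sum>i. (c i)\<^sup>2)"
proof -
  have "(\<lambda>i. c i *\<^sub>R e i) sums (\<Sum>i. c i *\<^sub>R e i)" using orthn_summable[OF assms] by blast
  then have "(\<lambda>n. (norm (\<Sum>i<n. c i *\<^sub>R e i))\<^sup>2) \<longlonglongrightarrow> (norm (\<Sum>i. c i *\<^sub>R e i))\<^sup>2"
    unfolding sums_def by (intro tendsto_intros)
  moreover have "(\<lambda>n. (norm (\<Sum>i<n. c i *\<^sub>R e i))\<^sup>2) = (\<lambda>n. \<Sum>i<n. (c i)\<^sup>2)"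
    using orthn_norm_sum[OF assms(1)] by simp
  moreover have "(\<lambda>n. \<Sum>i<n. (c i)\<^sup>2) \<longlonglongrightarrow> (\<Sum>i. (c i)\<^sup>2)"
    using assms(2) summable_LIMSEQ by blast
  ultimately show ?thesis using LIMSEQ_unique by metis
qed

lemma suminf_single_vec:
  assumes "orthn e"
  shows "(\<Sum>k. (f k * (x *\<^sub>R e i \<bullet> e k)) *\<^sub>R e k) = (f i * x) *\<^sub>R e i"
proof -
  have "(\<lambda>k. (f k * (x *\<^sub>R e i \<bullet> e k)) *\<^sub>R e k) = (\<lambda>k. if k = i then (f i * x) *\<^sub>R e i else 0)"
    using assms by (auto simp: orthn_def)
  then show ?thesis using sums_single[of i "\<lambda>_. (f i * x) *\<^sub>R e i"] sums_unique by metis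
qed


lemma ONB_expansion:
  assumes "ONB e"
  shows "(\<lambda>j. (x \<bullet> e j) *\<^sub>R e j) sums x"
proof -
  have o: "orthn e" using assms by (rule orthn_ONB)
  have sm: "summable (\<lambda>j. (x \<bullet> e j)\<^sup>2)" using bessel(1)[OF o] .
  define z where "z = (\<Sum>j. (x \<bullet> e j) *\<^sub>R e j)"
  have zs: "(\<lambda>j. (x \<bullet> e j) *\<^sub>R e j) sums z" unfolding z_def using orthn_summable[OF o sm] by blast
  have ze: "z \<bullet> e k = x \<bullet> e k" for k unfolding z_def by (rule orthn_suminf_inner[OF o sm])
  define d where "d = x - z"
  have de: "d \<bullet> e k = 0" for k unfolding d_def by (simp add: inner_diff_left ze)
  have sub: "subspace {v. d \<bullet> v = 0}"
    by (auto simp: subspace_def inner_add_right)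
  have "span (range e) \<subseteq> {v. d \<bullet> v = 0}"
  proof
    fix v assume "v \<in> span (range e)"
    then show "v \<in> {v. d \<bullet> v = 0}"
      by (induct rule: span_induct) (use sub de in auto)
  qed
  moreover have "closed {v. d \<bullet> v = 0}"
    by (intro closed_Collect_eq continuous_intros)
  ultimately have "closure (span (range e)) \<subseteq> {v. d \<bullet> v = 0}" by (rule closure_minimal)
  then have "d \<bullet> d = 0" using assms unfolding ONB_def by blast
  then have "x = z" unfolding d_def by (simp add: inner_eq_zero_iff)
  then show ?thesis using zs by simp
qed

lemma Vdelta_norm:
  assumes "orthn e" "x \<in> Vdelta e lam \<delta>"
  shows "(norm_Vdelta e lam \<delta> x)\<^sup>2 = (\<Sum>i. (lam i powr \<delta> * (x \<bullet> e i))\<^sup>2)"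
  using assms orthn_norm_suminf[OF assms(1), of "\<lambda>i. lam i powr \<delta> * (x \<bullet> e i)"]
  by (simp add: norm_Vdelta_def fracpow_def Vdelta_def)

lemma HS_bound:
  assumes "ONB e" "E \<in> HS_V_Vdelta e lam \<delta>"
  shows "summable (\<lambda>i. (lam i powr \<delta> * (E w \<bullet> e i))\<^sup>2)"
    "(\<Sum>i. (lam i powr \<delta> * (E w \<bullet> e i))\<^sup>2) \<le> (\<Sum>j. (norm_Vdelta e lam \<delta> (E (e j)))\<^sup>2) * (norm w)\<^sup>2"
proof -
  have o: "orthn e" using assms(1) by (rule orthn_ONB)
  have bl: "bounded_linear E" and inV: "\<And>x. E x \<in> Vdelta e lam \<delta>"
    and hs: "summable (\<lambda>j. (norm_Vdelta e lam \<delta> (E (e j)))\<^sup>2)"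
    using assms(2) by (auto simp: HS_V_Vdelta_def)
  define H2 where "H2 = (\<Sum>j. (norm_Vdelta e lam \<delta> (E (e j)))\<^sup>2)"
  show s: "summable (\<lambda>i. (lam i powr \<delta> * (E w \<bullet> e i))\<^sup>2)"
    using inV[of w] by (simp add: Vdelta_def)
  have part: "(\<Sum>i<N. (lam i powr \<delta> * (E w \<bullet> e i))\<^sup>2) \<le> H2 * (norm w)\<^sup>2" for N
  proof -
    define P where "P v = (\<Sum>i<N. (lam i powr \<delta> * (v \<bullet> e i)) *\<^sub>R e i)" for v
    have blP: "bounded_linear P" unfolding P_def
      by (intro bounded_linear_sum bounded_linear_compose[OF bounded_linear_scaleR_left]
            bounded_linear_const_mult bounded_linear_inner_left)
    have blPE: "bounded_linear (\<lambda>v. P (E v))" using bounded_linear_compose[OF blP bl] .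
    have nP: "(norm (P v))\<^sup>2 = (\<Sum>i<N. (lam i powr \<delta> * (v \<bullet> e i))\<^sup>2)" for v
      unfolding P_def by (rule orthn_norm_sum[OF o]) simp
    have nPe: "(norm (P (E (e j))))\<^sup>2 \<le> (norm_Vdelta e lam \<delta> (E (e j)))\<^sup>2" for j
    proof -
      have "(norm (P (E (e j))))\<^sup>2 = (\<Sum>i<N. (lam i powr \<delta> * (E (e j) \<bullet> e i))\<^sup>2)" by (rule nP)
      also have "\<dots> \<le> (\<Sum>i. (lam i powr \<delta> * (E (e j) \<bullet> e i))\<^sup>2)"
        using inV[of "e j"] by (intro sum_le_suminf) (auto simp: Vdelta_def)
      also have "\<dots> = (norm_Vdelta e lam \<delta> (E (e j)))\<^sup>2"
        using Vdelta_norm[OF o inV[of "e j"]] by simp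
      finally show ?thesis .
    qed
    have sums: "(\<lambda>j. (w \<bullet> e j) *\<^sub>R P (E (e j))) sums P (E w)"
      using bounded_linear.sums[OF blPE ONB_expansion[OF assms(1), of w]]
      by (simp add: linear_simps(5)[OF blPE])
    have bnd: "norm (\<Sum>j<M. (w \<bullet> e j) *\<^sub>R P (E (e j))) \<le> sqrt H2 * norm w" for M
    proof -
      have "norm (\<Sum>j<M. (w \<bullet> e j) *\<^sub>R P (E (e j))) \<le> (\<Sum>j<M. \<bar>w \<bullet> e j\<bar> * norm (P (E (e j))))"
        by (rule order_trans[OF norm_sum]) simp
      also have "\<dots> \<le> sqrt ((\<Sum>j<M. (w \<bullet> e j)\<^sup>2) * (\<Sum>j<M. (norm (P (E (e j))))\<^sup>2))"
        using Cauchy_Schwarz_ineq_sum[of "\<lambda>j. \<bar>w \<bullet> e j\<bar>" "\<lambda>j. norm (P (E (e j)))" "{..<M}"]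
        by (simp add: real_le_rsqrt)
      also have "\<dots> \<le> sqrt ((norm w)\<^sup>2 * H2)"
      proof (intro real_sqrt_le_mono mult_mono)
        show "(\<Sum>j<M. (w \<bullet> e j)\<^sup>2) \<le> (norm w)\<^sup>2" by (rule bessel_partial[OF o]) simp
        have "(\<Sum>j<M. (norm (P (E (e j))))\<^sup>2) \<le> (\<Sum>j<M. (norm_Vdelta e lam \<delta> (E (e j)))\<^sup>2)"
          by (intro sum_mono nPe)
        also have "\<dots> \<le> H2" unfolding H2_def using hs by (intro sum_le_suminf) auto
        finally show "(\<Sum>j<M. (norm (P (E (e j))))\<^sup>2) \<le> H2" .
      qed (auto intro: sum_nonneg)
      also have "\<dots> = sqrt H2 * norm w" by (simp add: real_sqrt_mult mult.commute)
      finally show ?thesis .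
    qed
    have "norm (P (E w)) \<le> sqrt H2 * norm w"
      using sums unfolding sums_def by (rule LIMSEQ_le_const2[OF tendsto_norm]) (use bnd in auto)
    then have "(norm (P (E w)))\<^sup>2 \<le> (sqrt H2 * norm w)\<^sup>2" by (simp add: power_mono)
    also have "\<dots> = H2 * (norm w)\<^sup>2"
      using hs by (simp add: power_mult_distrib H2_def suminf_nonneg)
    finally show ?thesis using nP by simp
  qed
  show "(\<Sum>i. (lam i powr \<delta> * (E w \<bullet> e i))\<^sup>2) \<le> (\<Sum>j. (norm_Vdelta e lam \<delta> (E (e j)))\<^sup>2) * (norm w)\<^sup>2"
    using suminf_le_const[OF s part] by (simp add: H2_def)
qed


lemma exp_kernel_integral:
  fixes l a b :: real
  assumes "a \<le> b"
  shows "((\<lambda>r. l * exp (- l * (b - r))) has_integral (1 - exp (- l * (b - a)))) {a..b}"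
proof -
  have "((\<lambda>r. l * exp (- l * (b - r))) has_integral (exp (- l * (b - b)) - exp (- l * (b - a)))) {a..b}"
    using assms
    by (intro fundamental_theorem_of_calculus)
       (auto intro!: derivative_eq_intros simp flip: has_real_derivative_iff_has_vector_derivative)
  then show ?thesis by simp
qed

lemma core_scalar:
  fixes G :: "real \<Rightarrow> 'v::{real_inner,banach}"
  assumes o: "orthn e" and l: "l > 0" and su: "s \<le> u" and ut: "u \<le> t"
    and cG: "continuous_on {s..t} G" and bG: "\<And>r. r \<in> {s..t} \<Longrightarrow> norm (G r) \<le> B"
  shows "(\<Sum>j<N. (integral {s..t} (\<lambda>r. l * exp (- l * (t - r)) * (G r \<bullet> e j))
                 - integral {s..u} (\<lambda>r. l * exp (- l * (u - r)) * (G r \<bullet> e j)))\<^sup>2)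
         \<le> (2 * B * (1 - exp (- l * (t - u))))\<^sup>2"
proof -
  define K where "K j \<tau> = integral {s..\<tau>} (\<lambda>r. l * exp (- l * (\<tau> - r)) * (G r \<bullet> e j))" for j \<tau>
  define d where "d j = K j t - K j u" for j
  define D where "D = (\<Sum>j<N. d j *\<^sub>R e j)"
  define c where "c = 1 - exp (- l * (t - u))"
  have B0: "0 \<le> B" using bG[of s] su ut by (auto intro: order_trans[OF norm_ge_zero])
  have c0: "0 \<le> c" unfolding c_def using l ut by (simp add: mult_nonneg_nonneg)
  have intg: "(\<lambda>r. a * exp (- l * (\<tau> - r)) * (G r \<bullet> v)) integrable_on {p..q}"
    if "s \<le> p" "q \<le> t" for a \<tau> v p q
  proof (rule integrable_continuous_interval)
    have "continuous_on {p..q} G" using that by (intro continuous_on_subset[OF cG]) auto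
    then show "continuous_on {p..q} (\<lambda>r. a * exp (- l * (\<tau> - r)) * (G r \<bullet> v))"
      by (intro continuous_intros)
  qed
  have lin: "(\<Sum>j<N. d j * K j \<tau>) = integral {s..\<tau>} (\<lambda>r. l * exp (- l * (\<tau> - r)) * (G r \<bullet> D))"
    if "\<tau> \<le> t" for \<tau>
  proof -
    have "integral {s..\<tau>} (\<lambda>r. l * exp (- l * (\<tau> - r)) * (G r \<bullet> D))
        = integral {s..\<tau>} (\<lambda>r. \<Sum>j<N. d j * (l * exp (- l * (\<tau> - r)) * (G r \<bullet> e j)))"
      unfolding D_def by (simp add: inner_sum_right sum_distrib_left mult_ac)
    also have "\<dots> = (\<Sum>j<N. integral {s..\<tau>} (\<lambda>r. d j * (l * exp (- l * (\<tau> - r)) * (G r \<bullet> e j))))"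
    proof (rule integral_sum)
      fix j assume "j \<in> {..<N}"
      show "(\<lambda>r. d j * (l * exp (- l * (\<tau> - r)) * (G r \<bullet> e j))) integrable_on {s..\<tau>}"
        using intg[of s \<tau> "d j * l" \<tau> "e j"] that by (simp add: mult.assoc)
    qed simp
    also have "\<dots> = (\<Sum>j<N. d j * K j \<tau>)" by (simp add: K_def)
    finally show ?thesis by simp
  qed
  define Q where "Q = (\<Sum>j<N. (d j)\<^sup>2)"
  have nD: "(norm D)\<^sup>2 = Q" unfolding D_def Q_def by (rule orthn_norm_sum[OF o]) simp
  define f where "f r = G r \<bullet> D" for r
  have bf: "\<bar>f r\<bar> \<le> B * norm D" if "r \<in> {s..t}" for r
    unfolding f_def using Cauchy_Schwarz_ineq2[of "G r" D] bG[OF that]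
    by (meson mult_right_mono norm_ge_zero order_trans)
  have Qeq: "Q = integral {s..t} (\<lambda>r. l * exp (- l * (t - r)) * f r)
               - integral {s..u} (\<lambda>r. l * exp (- l * (u - r)) * f r)"
    unfolding Q_def f_def using lin[of t] lin[of u] ut
    by (simp add: d_def power2_eq_square right_diff_distrib sum_subtractf)
  also have "integral {s..t} (\<lambda>r. l * exp (- l * (t - r)) * f r)
      = integral {s..u} (\<lambda>r. l * exp (- l * (t - r)) * f r) + integral {u..t} (\<lambda>r. l * exp (- l * (t - r)) * f r)"
    unfolding f_def using su ut intg[of s t l t D]
    by (intro Henstock_Kurzweil_Integration.integral_combine[symmetric]) auto
  finally have Q2: "Q = integral {s..u} (\<lambda>r. (l * exp (- l * (t - r)) - l * exp (- l * (u - r))) * f r)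
                       + integral {u..t} (\<lambda>r. l * exp (- l * (t - r)) * f r)"
    unfolding f_def using intg[of s u] su ut
    by (simp add: left_diff_distrib integral_diff)
  have I1: "\<bar>integral {s..u} (\<lambda>r. (l * exp (- l * (t - r)) - l * exp (- l * (u - r))) * f r)\<bar>
      \<le> c * (B * norm D)"
  proof -
    have "norm (integral {s..u} (\<lambda>r. (l * exp (- l * (t - r)) - l * exp (- l * (u - r))) * f r))
        \<le> integral {s..u} (\<lambda>r. c * (l * exp (- l * (u - r))) * (B * norm D))"
    proof (rule Henstock_Kurzweil_Integration.integral_norm_bound_integral)
      show "(\<lambda>r. (l * exp (- l * (t - r)) - l * exp (- l * (u - r))) * f r) integrable_on {s..u}"
        unfolding f_def using intg[of s u] su ut by (simp add: left_diff_distrib integrable_diff)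
      show "(\<lambda>r. c * (l * exp (- l * (u - r))) * (B * norm D)) integrable_on {s..u}"
        by (intro integrable_continuous_interval continuous_intros)
      fix r assume r: "r \<in> {s..u}"
      have e: "exp (- l * (t - r)) = exp (- l * (t - u)) * exp (- l * (u - r))"
        by (simp add: exp_add[symmetric] algebra_simps)
      have "\<bar>l * exp (- l * (t - r)) - l * exp (- l * (u - r))\<bar> = c * (l * exp (- l * (u - r)))"
        unfolding e c_def using l ut by (simp add: algebra_simps abs_if mult_le_cancel_left1)
      moreover have "\<bar>f r\<bar> \<le> B * norm D" using r ut by (intro bf) auto
      ultimately show "norm ((l * exp (- l * (t - r)) - l * exp (- l * (u - r))) * f r)
          \<le> c * (l * exp (- l * (u - r))) * (B * norm D)"
        unfolding real_norm_def by (simp add: abs_mult) (intro mult_left_mono, auto intro!: mult_nonneg_nonneg c0 l[THEN less_imp_le])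
    qed
    then have "\<bar>integral {s..u} (\<lambda>r. (l * exp (- l * (t - r)) - l * exp (- l * (u - r))) * f r)\<bar>
        \<le> integral {s..u} (\<lambda>r. c * (l * exp (- l * (u - r))) * (B * norm D))" by simp
    also have "\<dots> = c * (1 - exp (- l * (u - s))) * (B * norm D)"
      using integral_unique[OF exp_kernel_integral[OF su, of l]] by simp
    also have "\<dots> \<le> c * (B * norm D)"
    proof -
      have "c * (B * norm D) * (1 - exp (- l * (u - s))) \<le> c * (B * norm D) * 1"
        using c0 B0 by (intro mult_left_mono) auto
      then show ?thesis by (simp add: mult_ac)
    qed
    finally show ?thesis .
  qed
  have I2: "\<bar>integral {u..t} (\<lambda>r. l * exp (- l * (t - r)) * f r)\<bar> \<le> c * (B * norm D)"
  proof -
    have "norm (integral {u..t} (\<lambda>r. l * exp (- l * (t - r)) * f r))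
        \<le> integral {u..t} (\<lambda>r. l * exp (- l * (t - r)) * (B * norm D))"
    proof (rule Henstock_Kurzweil_Integration.integral_norm_bound_integral)
      show "(\<lambda>r. l * exp (- l * (t - r)) * f r) integrable_on {u..t}"
        unfolding f_def using intg[of u t] su by simp
      show "(\<lambda>r. l * exp (- l * (t - r)) * (B * norm D)) integrable_on {u..t}"
        by (intro integrable_continuous_interval continuous_intros)
      fix r assume r: "r \<in> {u..t}"
      have "\<bar>f r\<bar> \<le> B * norm D" using r su by (intro bf) auto
      then show "norm (l * exp (- l * (t - r)) * f r) \<le> l * exp (- l * (t - r)) * (B * norm D)"
        using l by (simp add: abs_mult)
    qed
    then have "\<bar>integral {u..t} (\<lambda>r. l * exp (- l * (t - r)) * f r)\<bar>
        \<le> integral {u..t} (\<lambda>r. l * exp (- l * (t - r)) * (B * norm D))" by simp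
    also have "\<dots> = c * (B * norm D)"
      using integral_unique[OF exp_kernel_integral[OF ut, of l]] by (simp add: c_def)
    finally show ?thesis .
  qed
  have "Q \<le> 2 * c * B * norm D" using Q2 I1 I2 by linarith
  then have "(norm D)\<^sup>2 \<le> (2 * c * B) * norm D" using nD by simp
  then have "norm D \<le> 2 * c * B"
    using B0 c0 by (cases "norm D = 0") (auto simp: power2_eq_square intro: mult_le_cancel_right_pos[THEN iffD1])
  then have "Q \<le> (2 * c * B)\<^sup>2" using nD by (metis norm_ge_zero power_mono)
  then show ?thesis unfolding Q_def d_def K_def c_def by (simp add: mult_ac)
qed


lemma one_minus_exp_le_powr:
  fixes x g :: real
  assumes "0 \<le> x" "0 < g" "g \<le> 1"
  shows "1 - exp (- x) \<le> x powr g"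
proof (cases "x \<le> 1")
  case True
  have "1 - exp (- x) \<le> x" using exp_ge_add_one_self[of "-x"] by simp
  also have "x = x powr 1" using assms by simp
  also have "\<dots> \<le> x powr g" using powr_mono'[of g 1 x] assms True by simp
  finally show ?thesis .
next
  case False
  then have "1 \<le> x powr g" using assms by (intro ge_one_powr_ge_zero) auto
  moreover have "1 - exp (- x) \<le> 1" by simp
  ultimately show ?thesis by linarith
qed

lemma nn_count_bound:
  fixes a :: "nat \<Rightarrow> real"
  assumes "\<And>j. 0 \<le> a j" "\<And>N. (\<Sum>j<N. a j) \<le> c"
  shows "(\<integral>\<^sup>+ j. ennreal (a j) \<partial>count_space UNIV) \<le> ennreal c"
proof -
  have s: "summable a" by (rule summableI_nonneg_bounded[OF assms])
  have "(\<integral>\<^sup>+ j. ennreal (a j) \<partial>count_space UNIV) = (\<Sum>j. ennreal (a j))"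
    by (rule nn_integral_count_space_nat)
  also have "\<dots> = ennreal (\<Sum>j. a j)"
    using s assms(1) by (intro suminf_ennreal_eq) auto
  also have "\<dots> \<le> ennreal c" using suminf_le_const[OF s assms(2)] by (rule ennreal_leI)
  finally show ?thesis .
qed

lemma basis_integrand:
  assumes "orthn e"
  shows "opA e lam (semigr e lam \<tau> (HSbasis e lam \<delta> (i, j) v))
     = (- lam i * (exp (- lam i * \<tau>) * (lam i powr (- \<delta>) * (v \<bullet> e j)))) *\<^sub>R e i"
proof -
  define c where "c = lam i powr (- \<delta>) * (v \<bullet> e j)"
  have "semigr e lam \<tau> (HSbasis e lam \<delta> (i, j) v) = (exp (- lam i * \<tau>) * c) *\<^sub>R e i"
    unfolding semigr_def HSbasis_def
    using suminf_single_vec[OF assms, of "\<lambda>k. exp (- lam k * \<tau>)" c i] by (simp add: c_def mult.assoc)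
  moreover have "opA e lam ((exp (- lam i * \<tau>) * c) *\<^sub>R e i) = (- lam i * (exp (- lam i * \<tau>) * c)) *\<^sub>R e i"
    unfolding opA_def
    using suminf_single_vec[OF assms, of "\<lambda>k. - lam k" "exp (- lam i * \<tau>) * c" i] by simp
  ultimately show ?thesis by (simp add: c_def)
qed

lemma cont_set_integral:
  fixes f :: "real \<Rightarrow> real"
  assumes "continuous_on {a..b} f"
  shows "set_integrable lborel {a..b} f" "(LINT r:{a..b}|lborel. f r) = integral {a..b} f"
proof -
  show si: "set_integrable lborel {a..b} f"
    unfolding set_integrable_def using assms by (intro borel_integrable_compact) auto
  show "(LINT r:{a..b}|lborel. f r) = integral {a..b} f" by (rule set_borel_integral_eq_integral(2)[OF si])
qed


lemma orthn_norm: "orthn e \<Longrightarrow> norm (e i) = 1"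
  by (simp add: orthn_def norm_eq_sqrt_inner)

lemma HS_holder_le:
  fixes w :: "real \<Rightarrow> 'v::{real_inner,banach,second_countable_topology}"
  assumes onb: "ONB e" and lp: "\<forall>i. lam i > 0" and g0: "0 < \<gamma>" and g1: "\<gamma> \<le> 1"
    and sg: "summable (\<lambda>i. lam i powr (2 * \<gamma> - 2 * \<delta>))"
    and cw: "continuous_on {0..1} w" and bw: "\<forall>r\<in>{0..1}. norm (w r) \<le> B0"
    and s0: "0 \<le> s" and su: "s \<le> u" and ut: "u \<le> t" and t1: "t \<le> 1"
  shows "HS_sq e lam \<delta> (\<lambda>E. (LINT r:{s..t}|lborel. opA e lam (semigr e lam (t - r) (E (w r - w s))))
           - (LINT r:{s..u}|lborel. opA e lam (semigr e lam (u - r) (E (w r - w s)))))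
     \<le> ennreal ((2 * (2 * B0) * sqrt (\<Sum>i. lam i powr (2 * \<gamma> - 2 * \<delta>)) * \<bar>t - u\<bar> powr \<gamma>)\<^sup>2)"
proof -
  have o: "orthn e" using onb by (rule orthn_ONB)
  define G where "G r = w r - w s" for r
  have cG: "continuous_on {s..t} G" unfolding G_def
    using s0 t1 by (intro continuous_intros continuous_on_subset[OF cw]) auto
  have bG: "norm (G r) \<le> 2 * B0" if "r \<in> {s..t}" for r
  proof -
    have "norm (G r) \<le> norm (w r) + norm (w s)" unfolding G_def by (rule norm_triangle_ineq4)
    also have "\<dots> \<le> B0 + B0" using bw that s0 t1 su ut by (intro add_mono) auto
    finally show ?thesis by simp
  qed
  define K where "K i j \<tau> = integral {s..\<tau>} (\<lambda>r. lam i * exp (- lam i * (\<tau> - r)) * (G r \<bullet> e j))" for i j \<tau>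
  have LI: "(LINT r:{s..\<tau>}|lborel. opA e lam (semigr e lam (\<tau> - r) (HSbasis e lam \<delta> (i, j) (G r))))
      = (- (lam i powr (- \<delta>)) * K i j \<tau>) *\<^sub>R e i" if "\<tau> \<le> t" for i j \<tau>
  proof -
    define \<phi> where "\<phi> r = - (lam i powr (- \<delta>)) * (lam i * exp (- lam i * (\<tau> - r)) * (G r \<bullet> e j))" for r
    have c\<phi>: "continuous_on {s..\<tau>} \<phi>" unfolding \<phi>_def
      using that by (intro continuous_intros continuous_on_subset[OF cG]) auto
    have "(LINT r:{s..\<tau>}|lborel. opA e lam (semigr e lam (\<tau> - r) (HSbasis e lam \<delta> (i, j) (G r))))
        = (LINT r:{s..\<tau>}|lborel. \<phi> r *\<^sub>R e i)"
      unfolding basis_integrand[OF o] \<phi>_def by (simp add: algebra_simps)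
    also have "\<dots> = (\<integral>r. (indicator {s..\<tau>} r *\<^sub>R \<phi> r) *\<^sub>R e i \<partial>lborel)"
      by (simp add: set_lebesgue_integral_def)
    also have "\<dots> = (\<integral>r. indicator {s..\<tau>} r *\<^sub>R \<phi> r \<partial>lborel) *\<^sub>R e i"
      using cont_set_integral(1)[OF c\<phi>] by (intro integral_scaleR_left) (simp add: set_integrable_def)
    also have "\<dots> = (LINT r:{s..\<tau>}|lborel. \<phi> r) *\<^sub>R e i"
      by (simp add: set_lebesgue_integral_def)
    also have "(LINT r:{s..\<tau>}|lborel. \<phi> r) = integral {s..\<tau>} \<phi>" by (rule cont_set_integral(2)[OF c\<phi>])
    also have "\<dots> = - (lam i powr (- \<delta>)) * K i j \<tau>" unfolding \<phi>_def K_def by simp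
    finally show ?thesis .
  qed
  define S where "S = (\<Sum>i. lam i powr (2 * \<gamma> - 2 * \<delta>))"
  define h where "h = t - u"
  have h0: "0 \<le> h" using ut by (simp add: h_def)
  have inner: "(\<integral>\<^sup>+ j. ennreal ((norm ((LINT r:{s..t}|lborel. opA e lam (semigr e lam (t - r) (HSbasis e lam \<delta> (i, j) (G r))))
           - (LINT r:{s..u}|lborel. opA e lam (semigr e lam (u - r) (HSbasis e lam \<delta> (i, j) (G r))))))\<^sup>2) \<partial>count_space UNIV)
      \<le> ennreal ((2 * (2 * B0))\<^sup>2 * h powr (2 * \<gamma>) * lam i powr (2 * \<gamma> - 2 * \<delta>))" for i
  proof -
    have li: "lam i > 0" using lp by auto
    have eq: "(norm ((LINT r:{s..t}|lborel. opA e lam (semigr e lam (t - r) (HSbasis e lam \<delta> (i, j) (G r))))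
           - (LINT r:{s..u}|lborel. opA e lam (semigr e lam (u - r) (HSbasis e lam \<delta> (i, j) (G r))))))\<^sup>2
        = (lam i powr (- \<delta>))\<^sup>2 * (K i j t - K i j u)\<^sup>2" for j
    proof -
      have "(norm ((LINT r:{s..t}|lborel. opA e lam (semigr e lam (t - r) (HSbasis e lam \<delta> (i, j) (G r))))
           - (LINT r:{s..u}|lborel. opA e lam (semigr e lam (u - r) (HSbasis e lam \<delta> (i, j) (G r))))))\<^sup>2
          = (norm ((- (lam i powr (- \<delta>)) * K i j t - - (lam i powr (- \<delta>)) * K i j u) *\<^sub>R e i))\<^sup>2"
        using LI[of t i j] LI[of u i j] ut by (simp only: scaleR_diff_left order_refl)
      also have "\<dots> = (- (lam i powr (- \<delta>)) * K i j t - - (lam i powr (- \<delta>)) * K i j u)\<^sup>2"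
        by (simp only: norm_scaleR orthn_norm[OF o] mult_1_right power2_abs)
      also have "\<dots> = (lam i powr (- \<delta>))\<^sup>2 * (K i j t - K i j u)\<^sup>2"
        by (simp add: power2_eq_square algebra_simps)
      finally show ?thesis .
    qed
    have "(\<integral>\<^sup>+ j. ennreal ((lam i powr (- \<delta>))\<^sup>2 * (K i j t - K i j u)\<^sup>2) \<partial>count_space UNIV)
        \<le> ennreal ((lam i powr (- \<delta>))\<^sup>2 * (2 * (2 * B0) * (1 - exp (- lam i * (t - u))))\<^sup>2)"
    proof (rule nn_count_bound)
      fix N
      have "(\<Sum>j<N. (K i j t - K i j u)\<^sup>2) \<le> (2 * (2 * B0) * (1 - exp (- lam i * (t - u))))\<^sup>2"
        unfolding K_def by (rule core_scalar[OF o li su ut cG bG])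
      then show "(\<Sum>j<N. (lam i powr (- \<delta>))\<^sup>2 * (K i j t - K i j u)\<^sup>2)
          \<le> (lam i powr (- \<delta>))\<^sup>2 * (2 * (2 * B0) * (1 - exp (- lam i * (t - u))))\<^sup>2"
        by (simp add: sum_distrib_left[symmetric] mult_left_mono)
    qed simp
    also have "\<dots> \<le> ennreal ((2 * (2 * B0))\<^sup>2 * h powr (2 * \<gamma>) * lam i powr (2 * \<gamma> - 2 * \<delta>))"
    proof (rule ennreal_leI)
      have e1: "0 \<le> 1 - exp (- lam i * (t - u))" using li ut by (simp add: mult_nonneg_nonneg)
      have e2: "1 - exp (- lam i * (t - u)) \<le> (lam i * h) powr \<gamma>"
        using one_minus_exp_le_powr[of "lam i * h" \<gamma>] li h0 g0 g1 by (simp add: h_def)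
      have "(1 - exp (- lam i * (t - u)))\<^sup>2 \<le> ((lam i * h) powr \<gamma>)\<^sup>2" by (rule power_mono[OF e2 e1])
      also have "\<dots> = lam i powr (2 * \<gamma>) * h powr (2 * \<gamma>)"
      proof -
        have "((lam i * h) powr \<gamma>)\<^sup>2 = (lam i * h) powr (2 * \<gamma>)"
          by (simp only: power2_eq_square powr_add[symmetric] mult_2)
        also have "\<dots> = lam i powr (2 * \<gamma>) * h powr (2 * \<gamma>)"
          using li h0 by (simp add: powr_mult)
        finally show ?thesis .
      qed
      finally have e3: "(1 - exp (- lam i * (t - u)))\<^sup>2 \<le> lam i powr (2 * \<gamma>) * h powr (2 * \<gamma>)" .
      have p: "(lam i powr (- \<delta>))\<^sup>2 * lam i powr (2 * \<gamma>) = lam i powr (2 * \<gamma> - 2 * \<delta>)"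
      proof -
        have "(lam i powr (- \<delta>))\<^sup>2 = lam i powr (- \<delta> + - \<delta>)"
          by (simp only: power2_eq_square powr_add[symmetric])
        then show ?thesis by (simp only: powr_add[symmetric]) (simp add: algebra_simps)
      qed
      have "(lam i powr (- \<delta>))\<^sup>2 * (2 * (2 * B0) * (1 - exp (- lam i * (t - u))))\<^sup>2
          = (2 * (2 * B0))\<^sup>2 * ((lam i powr (- \<delta>))\<^sup>2 * (1 - exp (- lam i * (t - u)))\<^sup>2)"
        by (simp add: power_mult_distrib)
      also have "\<dots> \<le> (2 * (2 * B0))\<^sup>2 * ((lam i powr (- \<delta>))\<^sup>2 * (lam i powr (2 * \<gamma>) * h powr (2 * \<gamma>)))"
        using e3 by (intro mult_left_mono) auto
      also have "\<dots> = (2 * (2 * B0))\<^sup>2 * h powr (2 * \<gamma>) * lam i powr (2 * \<gamma> - 2 * \<delta>)"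
        using p by (simp add: mult_ac)
      finally show "(lam i powr (- \<delta>))\<^sup>2 * (2 * (2 * B0) * (1 - exp (- lam i * (t - u))))\<^sup>2
          \<le> (2 * (2 * B0))\<^sup>2 * h powr (2 * \<gamma>) * lam i powr (2 * \<gamma> - 2 * \<delta>)" .
    qed
    finally show ?thesis by (simp add: eq)
  qed
  have "HS_sq e lam \<delta> (\<lambda>E. (LINT r:{s..t}|lborel. opA e lam (semigr e lam (t - r) (E (w r - w s))))
           - (LINT r:{s..u}|lborel. opA e lam (semigr e lam (u - r) (E (w r - w s)))))
      = (\<integral>\<^sup>+ i. \<integral>\<^sup>+ j. ennreal ((norm ((LINT r:{s..t}|lborel. opA e lam (semigr e lam (t - r) (HSbasis e lam \<delta> (i, j) (G r))))
           - (LINT r:{s..u}|lborel. opA e lam (semigr e lam (u - r) (HSbasis e lam \<delta> (i, j) (G r))))))\<^sup>2) \<partial>count_space UNIV \<partial>count_space UNIV)"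
    unfolding HS_sq_def G_def
    by (rule nn_integral_fst_count_space[symmetric, where f="\<lambda>ij. ennreal ((norm ((LINT r:{s..t}|lborel. opA e lam (semigr e lam (t - r) (HSbasis e lam \<delta> ij (w r - w s))))
           - (LINT r:{s..u}|lborel. opA e lam (semigr e lam (u - r) (HSbasis e lam \<delta> ij (w r - w s))))))\<^sup>2)", simplified])
  also have "\<dots> \<le> (\<integral>\<^sup>+ i. ennreal ((2 * (2 * B0))\<^sup>2 * h powr (2 * \<gamma>) * lam i powr (2 * \<gamma> - 2 * \<delta>)) \<partial>count_space UNIV)"
    by (intro nn_integral_mono inner)
  also have "\<dots> \<le> ennreal ((2 * (2 * B0))\<^sup>2 * h powr (2 * \<gamma>) * S)"
  proof (rule nn_count_bound)
    fix N
    have "(\<Sum>i<N. lam i powr (2 * \<gamma> - 2 * \<delta>)) \<le> S" unfolding S_def using sg by (intro sum_le_suminf) auto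
    then show "(\<Sum>i<N. (2 * (2 * B0))\<^sup>2 * h powr (2 * \<gamma>) * lam i powr (2 * \<gamma> - 2 * \<delta>))
        \<le> (2 * (2 * B0))\<^sup>2 * h powr (2 * \<gamma>) * S"
      by (simp add: sum_distrib_left[symmetric] mult_left_mono)
  qed simp
  also have "\<dots> = ennreal ((2 * (2 * B0) * sqrt S * \<bar>t - u\<bar> powr \<gamma>)\<^sup>2)"
  proof -
    have S0: "0 \<le> S" unfolding S_def using sg by (intro suminf_nonneg) auto
    have "\<bar>t - u\<bar> = h" using h0 by (simp add: h_def)
    have hp: "(h powr \<gamma>)\<^sup>2 = h powr (2 * \<gamma>)"
      by (simp only: power2_eq_square powr_add[symmetric] mult_2)
    have "(2 * (2 * B0) * sqrt S * \<bar>t - u\<bar> powr \<gamma>)\<^sup>2 = (2 * (2 * B0))\<^sup>2 * (sqrt S)\<^sup>2 * (h powr \<gamma>)\<^sup>2"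
      using \<open>\<bar>t - u\<bar> = h\<close> by (simp only: power_mult_distrib)
    also have "\<dots> = (2 * (2 * B0))\<^sup>2 * h powr (2 * \<gamma>) * S"
      using S0 hp by simp
    finally show ?thesis by simp
  qed
  finally show ?thesis unfolding S_def .
qed


lemma semigr_coeff:
  assumes o: "orthn e" and lp: "\<forall>i. lam i > 0" and \<tau>: "\<tau> \<ge> 0"
  shows "summable (\<lambda>i. (exp (- lam i * \<tau>) * (y \<bullet> e i))\<^sup>2)"
    "semigr e lam \<tau> y \<bullet> e k = exp (- lam k * \<tau>) * (y \<bullet> e k)"
proof -
  show s: "summable (\<lambda>i. (exp (- lam i * \<tau>) * (y \<bullet> e i))\<^sup>2)"
  proof (rule summable_comparison_test[OF _ bessel(1)[OF o, of y]])
    show "\<exists>N. \<forall>n\<ge>N. norm ((exp (- lam n * \<tau>) * (y \<bullet> e n))\<^sup>2) \<le> (y \<bullet> e n)\<^sup>2"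
    proof (intro exI allI impI)
      fix n
      have "exp (- lam n * \<tau>) \<le> 1" using lp \<tau> by (simp add: mult_nonneg_nonneg less_imp_le)
      then have "(exp (- lam n * \<tau>))\<^sup>2 \<le> 1" by (simp add: power_le_one)
      then have "(exp (- lam n * \<tau>))\<^sup>2 * (y \<bullet> e n)\<^sup>2 \<le> 1 * (y \<bullet> e n)\<^sup>2"
        by (intro mult_right_mono) auto
      then show "norm ((exp (- lam n * \<tau>) * (y \<bullet> e n))\<^sup>2) \<le> (y \<bullet> e n)\<^sup>2"
        by (simp add: power_mult_distrib)
    qed
  qed
  show "semigr e lam \<tau> y \<bullet> e k = exp (- lam k * \<tau>) * (y \<bullet> e k)"
    unfolding semigr_def by (rule orthn_suminf_inner[OF o s])
qed

lemma opA_semigr: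
  assumes o: "orthn e" and lp: "\<forall>i. lam i > 0" and \<tau>: "\<tau> \<ge> 0"
  shows "opA e lam (semigr e lam \<tau> y) = (\<Sum>i. (- lam i * (exp (- lam i * \<tau>) * (y \<bullet> e i))) *\<^sub>R e i)"
  unfolding opA_def semigr_coeff(2)[OF o lp \<tau>] ..

lemma powr_le_exp:
  fixes x a :: real
  assumes "0 \<le> x" "0 \<le> a" "a \<le> 1"
  shows "x powr a \<le> exp x"
proof (cases "x \<le> 1")
  case True
  then have "x powr a \<le> 1" using assms by (intro powr_le1) auto
  also have "1 \<le> exp x" using assms by simp
  finally show ?thesis .
next
  case False
  then have "x powr a \<le> x powr 1" using assms by (intro powr_mono) auto
  also have "\<dots> = x" using False by simp
  also have "x \<le> exp x" using exp_ge_add_one_self[of x] by linarith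
  finally show ?thesis .
qed


lemma kernel_ineq:
  fixes l \<tau> \<delta> :: real
  assumes l: "l > 0" and \<tau>: "\<tau> > 0" and d1: "1/2 \<le> \<delta>" and d2: "\<delta> \<le> 1"
  shows "(l * exp (- l * \<tau>))\<^sup>2 \<le> \<tau> powr (2 * \<delta> - 2) * (l powr \<delta>)\<^sup>2"
proof -
  define a where "a = 2 - 2 * \<delta>"
  have a0: "0 \<le> a" "a \<le> 1" using d1 d2 by (auto simp: a_def)
  have "(l * exp (- l * \<tau>))\<^sup>2 = l powr 2 * exp (- l * \<tau>) * exp (- l * \<tau>)"
    using l by (simp add: power2_eq_square powr_numeral)
  also have "l powr 2 = (l powr \<delta>)\<^sup>2 * (l * \<tau>) powr a * \<tau> powr (2 * \<delta> - 2)"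
  proof -
    have "(l powr \<delta>)\<^sup>2 = l powr (2 * \<delta>)" by (simp only: power2_eq_square powr_add[symmetric] mult_2)
    moreover have "(l * \<tau>) powr a = l powr a * \<tau> powr a" using l \<tau> by (simp add: powr_mult)
    moreover have "\<tau> powr a * \<tau> powr (2 * \<delta> - 2) = 1" using \<tau> by (simp add: powr_add[symmetric] a_def)
    ultimately have "(l powr \<delta>)\<^sup>2 * (l * \<tau>) powr a * \<tau> powr (2 * \<delta> - 2) = l powr (2 * \<delta>) * l powr a"
      by (simp add: mult_ac)
    also have "\<dots> = l powr 2" by (simp add: powr_add[symmetric] a_def)
    finally show ?thesis by simp
  qed
  also have "(l powr \<delta>)\<^sup>2 * (l * \<tau>) powr a * \<tau> powr (2 * \<delta> - 2) * exp (- l * \<tau>) * exp (- l * \<tau>)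
      \<le> (l powr \<delta>)\<^sup>2 * exp (l * \<tau>) * \<tau> powr (2 * \<delta> - 2) * exp (- l * \<tau>) * exp (- l * \<tau>)"
    using powr_le_exp[of "l * \<tau>" a] a0 l \<tau>
    by (intro mult_right_mono mult_left_mono) auto
  also have "\<dots> = \<tau> powr (2 * \<delta> - 2) * (l powr \<delta>)\<^sup>2 * exp (- l * \<tau>)"
    by (simp add: mult_ac exp_minus field_simps)
  also have "\<dots> \<le> \<tau> powr (2 * \<delta> - 2) * (l powr \<delta>)\<^sup>2"
    using l \<tau> by (intro mult_left_le) (auto simp: mult_nonneg_nonneg)
  finally show ?thesis .
qed


lemma opA_semigr_bound:
  assumes o: "orthn e" and lp: "\<forall>i. lam i > 0" and \<tau>: "\<tau> > 0" and d1: "1/2 \<le> \<delta>" and d2: "\<delta> \<le> 1"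
    and sy: "summable (\<lambda>i. (lam i powr \<delta> * (y \<bullet> e i))\<^sup>2)"
    and My: "(\<Sum>i. (lam i powr \<delta> * (y \<bullet> e i))\<^sup>2) \<le> M2"
  shows "norm (opA e lam (semigr e lam \<tau> y)) \<le> \<tau> powr (\<delta> - 1) * sqrt M2"
proof -
  define c where "c i = - lam i * (exp (- lam i * \<tau>) * (y \<bullet> e i))" for i
  have ci: "(c i)\<^sup>2 \<le> \<tau> powr (2 * \<delta> - 2) * (lam i powr \<delta> * (y \<bullet> e i))\<^sup>2" for i
  proof -
    have "(c i)\<^sup>2 = (lam i * exp (- lam i * \<tau>))\<^sup>2 * (y \<bullet> e i)\<^sup>2"
      by (simp add: c_def power_mult_distrib)
    also have "\<dots> \<le> \<tau> powr (2 * \<delta> - 2) * (lam i powr \<delta>)\<^sup>2 * (y \<bullet> e i)\<^sup>2"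
      using kernel_ineq[of "lam i" \<tau> \<delta>] lp \<tau> d1 d2 by (intro mult_right_mono) auto
    finally show ?thesis by (simp add: power_mult_distrib mult_ac)
  qed
  have sc: "summable (\<lambda>i. (c i)\<^sup>2)"
    using ci by (intro summable_comparison_test[OF _ summable_mult[OF sy, of "\<tau> powr (2 * \<delta> - 2)"]]) auto
  have "(norm (opA e lam (semigr e lam \<tau> y)))\<^sup>2 = (\<Sum>i. (c i)\<^sup>2)"
    unfolding opA_semigr[OF o lp less_imp_le[OF \<tau>]] c_def[symmetric]
    by (rule orthn_norm_suminf[OF o sc])
  also have "\<dots> \<le> (\<Sum>i. \<tau> powr (2 * \<delta> - 2) * (lam i powr \<delta> * (y \<bullet> e i))\<^sup>2)"
    by (rule suminf_le[OF ci sc summable_mult[OF sy]])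
  also have "\<dots> = \<tau> powr (2 * \<delta> - 2) * (\<Sum>i. (lam i powr \<delta> * (y \<bullet> e i))\<^sup>2)"
    by (rule suminf_mult[OF sy])
  also have "\<dots> \<le> \<tau> powr (2 * \<delta> - 2) * M2" using My by (intro mult_left_mono) auto
  also have "\<dots> = (\<tau> powr (\<delta> - 1) * sqrt M2)\<^sup>2"
  proof -
    have "0 \<le> (\<Sum>i. (lam i powr \<delta> * (y \<bullet> e i))\<^sup>2)" using sy by (intro suminf_nonneg) auto
    then have M0: "0 \<le> M2" using My by linarith
    have "(\<tau> powr (\<delta> - 1))\<^sup>2 = \<tau> powr ((\<delta> - 1) + (\<delta> - 1))"
      by (simp only: power2_eq_square powr_add[symmetric])
    also have "(\<delta> - 1) + (\<delta> - 1) = 2 * \<delta> - 2" by simp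
    finally have "(\<tau> powr (\<delta> - 1))\<^sup>2 = \<tau> powr (2 * \<delta> - 2)" .
    then show ?thesis using M0 by (simp add: power_mult_distrib)
  qed
  finally have sq: "(norm (opA e lam (semigr e lam \<tau> y)))\<^sup>2 \<le> (\<tau> powr (\<delta> - 1) * sqrt M2)\<^sup>2" .
  have "0 \<le> (\<Sum>i. (lam i powr \<delta> * (y \<bullet> e i))\<^sup>2)" using sy by (intro suminf_nonneg) auto
  then have M0: "0 \<le> M2" using My by linarith
  show ?thesis by (rule power2_le_imp_le[OF sq]) (simp add: M0)
qed


lemma coef_summable:
  assumes lp: "\<forall>i. lam i > 0" and \<tau>: "\<tau> > 0" and d1: "1/2 \<le> \<delta>" and d2: "\<delta> \<le> 1"
    and sy: "summable (\<lambda>i. (lam i powr \<delta> * (y \<bullet> e i))\<^sup>2)"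
  shows "summable (\<lambda>i. (- lam i * (exp (- lam i * \<tau>) * (y \<bullet> e i)))\<^sup>2)"
proof -
  define c where "c i = - lam i * (exp (- lam i * \<tau>) * (y \<bullet> e i))" for i
  have ci: "(c i)\<^sup>2 \<le> \<tau> powr (2 * \<delta> - 2) * (lam i powr \<delta> * (y \<bullet> e i))\<^sup>2" for i
  proof -
    have "(c i)\<^sup>2 = (lam i * exp (- lam i * \<tau>))\<^sup>2 * (y \<bullet> e i)\<^sup>2"
      by (simp add: c_def power_mult_distrib)
    also have "\<dots> \<le> \<tau> powr (2 * \<delta> - 2) * (lam i powr \<delta>)\<^sup>2 * (y \<bullet> e i)\<^sup>2"
      using kernel_ineq[of "lam i" \<tau> \<delta>] lp \<tau> d1 d2 by (intro mult_right_mono) auto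
    finally show ?thesis by (simp add: power_mult_distrib mult_ac)
  qed
  have "summable (\<lambda>i. (c i)\<^sup>2)"
    using ci by (intro summable_comparison_test[OF _ summable_mult[OF sy, of "\<tau> powr (2 * \<delta> - 2)"]]) auto
  then show ?thesis by (simp add: c_def)
qed

lemma powr_kernel_integrable:
  fixes s t a :: real
  assumes "s \<le> t" "a > -1"
  shows "set_integrable lborel {s..t} (\<lambda>r. (t - r) powr a)"
proof -
  have "(\<lambda>x. x powr a) integrable_on {0..t - s}"
    by (rule integrable_on_powr_from_0) (use assms in auto)
  hence "(\<lambda>x. x powr a) integrable_on (cbox 0 (t - s))" by simp
  from integrable_affinity[OF this, of "-1" t]
  have "(\<lambda>r. (t - r) powr a) integrable_on {s..t}" using assms by simp
  hence "(\<lambda>r. (t - r) powr a) absolutely_integrable_on {s..t}"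
    by (subst absolutely_integrable_on_iff_nonneg) auto
  then show ?thesis unfolding set_integrable_def
    by (subst (asm) integrable_completion) auto
qed


lemma integrable_part:
  fixes w :: "real \<Rightarrow> 'v::{real_inner,banach,second_countable_topology}"
  assumes onb: "ONB e" and lp: "\<forall>i. lam i > 0" and d1: "1/2 \<le> \<delta>" and d2: "\<delta> \<le> 1"
    and E: "E \<in> HS_V_Vdelta e lam \<delta>"
    and cw: "continuous_on {0..1} w" and bw: "\<forall>r\<in>{0..1}. norm (w r) \<le> B0"
    and s0: "0 \<le> s" and st: "s \<le> t" and t1: "t \<le> 1"
  shows "set_integrable lborel {s..t} (\<lambda>r. opA e lam (semigr e lam (t - r) (E (w r - w s))))"
proof -
  have o: "orthn e" using onb by (rule orthn_ONB)
  have bl: "bounded_linear E" using E by (simp add: HS_V_Vdelta_def)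
  define y where "y r = E (w r - w s)" for r
  define f where "f r = opA e lam (semigr e lam (t - r) (y r))" for r
  define H2 where "H2 = (\<Sum>j. (norm_Vdelta e lam \<delta> (E (e j)))\<^sup>2)"
  define M2 where "M2 = H2 * (2 * B0)\<^sup>2"
  have H0: "0 \<le> H2" unfolding H2_def using E by (intro suminf_nonneg) (auto simp: HS_V_Vdelta_def)
  have bws: "norm (w r - w s) \<le> 2 * B0" if "r \<in> {s..t}" for r
  proof -
    have "norm (w r - w s) \<le> norm (w r) + norm (w s)" by (rule norm_triangle_ineq4)
    also have "\<dots> \<le> B0 + B0" using bw that s0 t1 st by (intro add_mono) auto
    finally show ?thesis by simp
  qed
  have sy: "summable (\<lambda>i. (lam i powr \<delta> * (y r \<bullet> e i))\<^sup>2)" for r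
    unfolding y_def by (rule HS_bound(1)[OF onb E])
  have My: "(\<Sum>i. (lam i powr \<delta> * (y r \<bullet> e i))\<^sup>2) \<le> M2" if "r \<in> {s..t}" for r
  proof -
    have "(\<Sum>i. (lam i powr \<delta> * (y r \<bullet> e i))\<^sup>2) \<le> H2 * (norm (w r - w s))\<^sup>2"
      unfolding y_def H2_def by (rule HS_bound(2)[OF onb E])
    also have "\<dots> \<le> H2 * (2 * B0)\<^sup>2"
      using bws[OF that] H0 by (intro mult_left_mono power_mono) auto
    finally show ?thesis by (simp add: M2_def)
  qed
  have bound: "norm (f r) \<le> (t - r) powr (\<delta> - 1) * sqrt M2" if "r \<in> {s..<t}" for r
    unfolding f_def using that
    by (intro opA_semigr_bound[OF o lp _ d1 d2 sy My]) auto
  have cy: "continuous_on {s..t} y" unfolding y_def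
    using s0 t1
    by (intro continuous_on_compose2[OF linear_continuous_on[OF bl, of UNIV]] continuous_intros
        continuous_on_subset[OF cw]) auto
  define c where "c i r = - lam i * (exp (- lam i * (t - r)) * (y r \<bullet> e i))" for i r
  define P where "P N r = (\<Sum>i<N. c i r *\<^sub>R e i)" for N r
  have measP: "(\<lambda>r. indicator {s..<t} r *\<^sub>R P N r) \<in> borel_measurable borel" for N
  proof (rule borel_measurable_continuous_on_indicator)
    have "continuous_on {s..t} (P N)" unfolding P_def c_def
      by (intro continuous_intros cy)
    then show "continuous_on {s..<t} (P N)" by (rule continuous_on_subset) auto
  qed auto
  have limP: "(\<lambda>N. indicator {s..<t} r *\<^sub>R P N r) \<longlonglongrightarrow> indicator {s..<t} r *\<^sub>R f r" for r
  proof (cases "r \<in> {s..<t}")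
    case True
    then have \<tau>: "t - r > 0" by auto
    have fs: "f r = (\<Sum>i. c i r *\<^sub>R e i)"
      unfolding f_def c_def using \<tau> by (intro opA_semigr[OF o lp]) auto
    have "summable (\<lambda>i. (c i r)\<^sup>2)"
      unfolding c_def by (rule coef_summable[OF lp \<tau> d1 d2 sy])
    then have "(\<lambda>i. c i r *\<^sub>R e i) sums f r" using fs orthn_summable[OF o] by (simp add: summable_sums)
    then have "(\<lambda>N. P N r) \<longlonglongrightarrow> f r" unfolding P_def sums_def .
    then show ?thesis using True by simp
  qed simp
  have meas0: "(\<lambda>r. indicator {s..<t} r *\<^sub>R f r) \<in> borel_measurable lborel"
    using borel_measurable_LIMSEQ_metric[OF measP limP] by simp
  have geq: "(\<lambda>r. indicator {s..t} r *\<^sub>R f r) = (\<lambda>r. indicator {s..<t} r *\<^sub>R f r + indicator {t} r *\<^sub>R f t)"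
    using st by (auto simp: fun_eq_iff indicator_def)
  have meas: "(\<lambda>r. indicator {s..t} r *\<^sub>R f r) \<in> borel_measurable lborel"
    unfolding geq using meas0 by measurable
  define h where "h r = indicator {s..t} r *\<^sub>R ((t - r) powr (\<delta> - 1) * sqrt M2)" for r
  have ih: "integrable lborel h"
    unfolding h_def using powr_kernel_integrable[OF st, of "\<delta> - 1"] d1
    by (simp add: set_integrable_def integrable_mult_left mult.assoc[symmetric] flip: scaleR_scaleR)
  have "integrable lborel (\<lambda>r. indicator {s..t} r *\<^sub>R f r)"
  proof (rule Bochner_Integration.integrable_bound[OF ih meas])
    show "AE r in lborel. norm (indicator {s..t} r *\<^sub>R f r) \<le> norm (h r)"
      using AE_lborel_singleton[of t]
    proof (rule eventually_mono)
      fix r :: real assume "r \<noteq> t"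
      show "norm (indicator {s..t} r *\<^sub>R f r) \<le> norm (h r)"
      proof (cases "r \<in> {s..<t}")
        case True
        then have "norm (f r) \<le> (t - r) powr (\<delta> - 1) * sqrt M2" by (rule bound)
        then show ?thesis using True by (simp add: h_def)
      next
        case False
        then have "r \<notin> {s..t}" using \<open>r \<noteq> t\<close> by auto
        then show ?thesis by (simp add: h_def)
      qed
    qed
  qed
  then show ?thesis unfolding set_integrable_def f_def y_def .
qed


lemma holder_cont:
  fixes f :: "real \<Rightarrow> 'v::real_normed_vector"
  assumes "holder_on g S f" "g > 0"
  shows "continuous_on S f"
proof -
  obtain C where C: "\<forall>x\<in>S. \<forall>y\<in>S. norm (f x - f y) \<le> C * \<bar>x - y\<bar> powr g"
    using assms(1) unfolding holder_on_def by blast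
  show ?thesis unfolding continuous_on_def
  proof
    fix a assume a: "a \<in> S"
    have ev: "eventually (\<lambda>r. norm (f r - f a) \<le> C * \<bar>r - a\<bar> powr g) (at a within S)"
      unfolding eventually_at_filter using C a by (auto intro: always_eventually)
    have "((\<lambda>r. \<bar>r - a\<bar> powr g) \<longlongrightarrow> 0) (at a within S)"
      by (rule tendsto_zero_powrI) (auto intro!: tendsto_eq_intros assms(2))
    then have "((\<lambda>r. C * \<bar>r - a\<bar> powr g) \<longlongrightarrow> 0) (at a within S)"
      by (rule tendsto_mult_right_zero)
    then have "((\<lambda>r. f r - f a) \<longlongrightarrow> 0) (at a within S)"
      by (rule Lim_null_comparison[OF ev])
    then have "((\<lambda>r. (f r - f a) + f a) \<longlongrightarrow> 0 + f a) (at a within S)"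
      by (intro tendsto_add tendsto_const)
    then show "(f \<longlongrightarrow> f a) (at a within S)" by simp
  qed
qed

lemma holder_bounded:
  fixes f :: "real \<Rightarrow> 'v::real_normed_vector"
  assumes "holder_on 0 S f" "a \<in> S"
  shows "\<exists>B. \<forall>r\<in>S. norm (f r) \<le> B"
proof -
  obtain C where C: "\<forall>x\<in>S. \<forall>y\<in>S. norm (f x - f y) \<le> C * \<bar>x - y\<bar> powr 0"
    using assms(1) unfolding holder_on_def by blast
  have "norm (f r) \<le> norm (f a) + \<bar>C\<bar>" if "r \<in> S" for r
  proof -
    have "norm (f r - f a) \<le> \<bar>C\<bar>"
    proof (cases "r = a")
      case False
      then have "norm (f r - f a) \<le> C" using C that assms(2) by force
      then show ?thesis by linarith
    qed simp
    then show ?thesis using norm_triangle_ineq2[of "f r" "f a"] by linarith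
  qed
  then show ?thesis by blast
qed


lemma gamma_lt_delta:
  fixes lam :: "nat \<Rightarrow> real"
  assumes "filterlim lam at_top sequentially" "summable (\<lambda>i. lam i powr p)"
  shows "p < 0"
proof (rule ccontr)
  assume "\<not> p < 0"
  then have p: "0 \<le> p" by simp
  have "eventually (\<lambda>i. lam i \<ge> 1) sequentially"
    using assms(1) by (simp add: filterlim_at_top)
  then have "eventually (\<lambda>i. 1 \<le> lam i powr p) sequentially"
    by eventually_elim (use p in \<open>auto intro: ge_one_powr_ge_zero\<close>)
  moreover have "(\<lambda>i. lam i powr p) \<longlonglongrightarrow> 0" using assms(2) by (rule summable_LIMSEQ_zero)
  ultimately have "1 \<le> (0::real)"
    by (intro tendsto_lowerbound[OF _ _ trivial_limit_sequentially]) auto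
  then show False by simp
qed

lemma LINT_point_zero:
  fixes f :: "real \<Rightarrow> 'v::{banach,second_countable_topology}"
  shows "(LINT r:{s}|lborel. f r) = 0"
  unfolding set_lebesgue_integral_def
  by (rule integral_eq_zero_AE) (use AE_lborel_singleton[of s] in \<open>auto elim!: eventually_mono\<close>)

theorem lemma5p2:
  fixes e :: "nat \<Rightarrow> 'v::{real_inner,banach,second_countable_topology}"
    and lam q :: "nat \<Rightarrow> real" and \<delta> \<gamma> :: real
    and M :: "'a measure" and W :: "'a \<Rightarrow> real \<Rightarrow> 'v"
  assumes onb: "ONB e"
    and lam_pos: "\<forall>i. lam i > 0"
    and lam_inf: "filterlim lam at_top sequentially"
    and delta: "\<delta> \<in> {0..1}"
    and sum_delta: "summable (\<lambda>i. lam i powr (- 2 * \<delta>))"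
    and q_pos: "\<forall>i. q i > 0"
    and q_trace: "summable q"
    and M: "prob_space M"
    and W: "Q_Wiener M e q W"
    and W_holder: "\<forall>x\<in>space M. \<forall>\<gamma>'<1/2. holder_on \<gamma>' {0..1} (W x)"
    and gamma: "\<gamma> > 1/2"
    and sum_gamma: "summable (\<lambda>i. lam i powr (2 * \<gamma> - 2 * \<delta>))"
  shows "AE x in M. \<exists>C. \<forall>s\<in>{0..<1}.
     (\<forall>t\<in>{s..1}. \<forall>E\<in>HS_V_Vdelta e lam \<delta>.
        set_integrable lborel {s..t} (\<lambda>r. opA e lam (semigr e lam (t - r) (E (W x r - W x s))))) \<and>
     (\<forall>t\<in>{s..1}. HS_sq e lam \<delta>
        (\<lambda>E. LINT r:{s..t}|lborel. opA e lam (semigr e lam (t - r) (E (W x r - W x s)))) < \<infinity>) \<and>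
     (\<forall>t\<in>{s..1}. \<forall>u\<in>{s..1}. HS_sq e lam \<delta>
        (\<lambda>E. (LINT r:{s..t}|lborel. opA e lam (semigr e lam (t - r) (E (W x r - W x s))))
           - (LINT r:{s..u}|lborel. opA e lam (semigr e lam (u - r) (E (W x r - W x s)))))
        \<le> ennreal ((C * \<bar>t - u\<bar> powr \<gamma>)\<^sup>2))"
proof (rule AE_I2)
  fix x assume x: "x \<in> space M"
  have "2 * \<gamma> - 2 * \<delta> < 0" by (rule gamma_lt_delta[OF lam_inf sum_gamma])
  then have gd: "\<gamma> < \<delta>" by simp
  have d1: "1/2 \<le> \<delta>" and d2: "\<delta> \<le> 1" using gd gamma delta by auto
  have g0: "0 < \<gamma>" and g1: "\<gamma> \<le> 1" using gd gamma d2 by auto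
  define w where "w = W x"
  have cw: "continuous_on {0..1} w" unfolding w_def
    using W_holder x by (intro holder_cont[of "1/4"]) auto
  obtain B0 where bw: "\<forall>r\<in>{0..1}. norm (w r) \<le> B0"
    using holder_bounded[of "{0..1}" w 0] W_holder x unfolding w_def by auto
  define C where "C = 2 * (2 * B0) * sqrt (\<Sum>i. lam i powr (2 * \<gamma> - 2 * \<delta>))"
  define T where "T s t E = (LINT r:{s..t}|lborel. opA e lam (semigr e lam (t - r) (E (w r - w s))))" for s t E
  have P3: "HS_sq e lam \<delta> (\<lambda>E. T s t E - T s u E) \<le> ennreal ((C * \<bar>t - u\<bar> powr \<gamma>)\<^sup>2)"
    if "0 \<le> s" "s \<le> t" "t \<le> 1" "s \<le> u" "u \<le> 1" for s t u
  proof (cases "u \<le> t")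
    case True
    then show ?thesis unfolding T_def C_def
      using HS_holder_le[OF onb lam_pos g0 g1 sum_gamma cw bw, of s u t] that by simp
  next
    case False
    have "HS_sq e lam \<delta> (\<lambda>E. T s t E - T s u E) = HS_sq e lam \<delta> (\<lambda>E. T s u E - T s t E)"
      unfolding HS_sq_def by (simp add: norm_minus_commute)
    also have "\<dots> \<le> ennreal ((C * \<bar>u - t\<bar> powr \<gamma>)\<^sup>2)" unfolding T_def C_def
      using HS_holder_le[OF onb lam_pos g0 g1 sum_gamma cw bw, of s t u] that False by simp
    also have "\<bar>u - t\<bar> = \<bar>t - u\<bar>" by simp
    finally show ?thesis .
  qed
  show "\<exists>C. \<forall>s\<in>{0..<1}.
     (\<forall>t\<in>{s..1}. \<forall>E\<in>HS_V_Vdelta e lam \<delta>.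
        set_integrable lborel {s..t} (\<lambda>r. opA e lam (semigr e lam (t - r) (E (W x r - W x s))))) \<and>
     (\<forall>t\<in>{s..1}. HS_sq e lam \<delta>
        (\<lambda>E. LINT r:{s..t}|lborel. opA e lam (semigr e lam (t - r) (E (W x r - W x s)))) < \<infinity>) \<and>
     (\<forall>t\<in>{s..1}. \<forall>u\<in>{s..1}. HS_sq e lam \<delta>
        (\<lambda>E. (LINT r:{s..t}|lborel. opA e lam (semigr e lam (t - r) (E (W x r - W x s))))
           - (LINT r:{s..u}|lborel. opA e lam (semigr e lam (u - r) (E (W x r - W x s)))))
        \<le> ennreal ((C * \<bar>t - u\<bar> powr \<gamma>)\<^sup>2))"
  proof (intro exI[of _ C] ballI conjI)
    fix s :: real assume s: "s \<in> {0..<1}"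
    {
      fix t :: real and E assume t: "t \<in> {s..1}" and E: "E \<in> HS_V_Vdelta e lam \<delta>"
      show "set_integrable lborel {s..t} (\<lambda>r. opA e lam (semigr e lam (t - r) (E (W x r - W x s))))"
        using integrable_part[OF onb lam_pos d1 d2 E cw bw, of s t] s t by (simp add: w_def)
    }
    {
      fix t :: real assume t: "t \<in> {s..1}"
      have "HS_sq e lam \<delta> (\<lambda>E. T s t E - T s s E) \<le> ennreal ((C * \<bar>t - s\<bar> powr \<gamma>)\<^sup>2)"
        using P3[of s t s] s t by auto
      moreover have "(\<lambda>E. T s t E - T s s E) = T s t"
        unfolding T_def by (simp add: LINT_point_zero fun_eq_iff)
      ultimately have le: "HS_sq e lam \<delta> (T s t) \<le> ennreal ((C * \<bar>t - s\<bar> powr \<gamma>)\<^sup>2)"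
        by simp
      have "HS_sq e lam \<delta> (T s t) < \<infinity>"
        using le_less_trans[OF le ennreal_less_top] by (simp add: infinity_ennreal_def)
      then show "HS_sq e lam \<delta>
        (\<lambda>E. LINT r:{s..t}|lborel. opA e lam (semigr e lam (t - r) (E (W x r - W x s)))) < \<infinity>"
        unfolding T_def w_def .
    }
    {
      fix t u :: real assume t: "t \<in> {s..1}" and u: "u \<in> {s..1}"
      show "HS_sq e lam \<delta>
        (\<lambda>E. (LINT r:{s..t}|lborel. opA e lam (semigr e lam (t - r) (E (W x r - W x s))))
           - (LINT r:{s..u}|lborel. opA e lam (semigr e lam (u - r) (E (W x r - W x s)))))
        \<le> ennreal ((C * \<bar>t - u\<bar> powr \<gamma>)\<^sup>2)"
        using P3[of s t u] s t u unfolding T_def w_def by auto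
    }
  qed
qed


end
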